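(* Let $\mathbb{T}$ be a time scale and $f:\mathbb{T}\to\mathbb{R}$, $f(t)=t$. Then for $\alpha\in]0,1]$ and $t\in\mathbb{T}_\kappa$, $$f^{\nabla^\alpha}(t)=\begin{cases}[t-\rho(t)]^{1-\alpha}&\text{if }\alpha\neq1,\\ 1&\text{if }\alpha=1.\end{cases}$$
   Context: A time scale $\mathbb{T}$ is a nonempty closed subset of $\mathbb{R}$. $\rho(t)=\sup\{s\in\mathbb{T}: s<t\}$ (with $\sup\emptyset=\inf\mathbb{T}$), $\sigma(t)=\inf\{s\in\mathbb{T}:s>t\}$ (with $\inf\emptyset=\sup\mathbb{T}$), $f^\rho=f\circ\rho$. $\mathbb{T}_\kappa=\mathbb{T}\setminus\{\inf\mathbb{T}\}$ if $\inf\mathbb{T}$ is finite with $\sigma(\inf\mathbb{T})>\inf\mathbb{T}$, otherwise $\mathbb{T}_\kappa=\mathbb{T}$. $0^{\gamma}=0$ for $\gamma>0$. Let $A=\,]0,1]\cap\{1/q: q\text{ odd positive integer}\}$; for $\alpha=1/q\in A$, $x^\alpha$ is the real $q$-th root. For $t\in\mathbb{T}_\kappa$, $f^{\nabla^\alpha}(t)$ is the real number (if it exists) such that for every $\varepsilon>0$ there is $\delta>0$ with $\big|[f(s)-f^\rho(t)]-f^{\nabla^\alpha}(t)[s-\rho(t)]^\alpha\big|\le\varepsilon|s-\rho(t)|^\alpha$ for all $s\in\,]t-\delta,t+\delta[\,\cap\mathbb{T}$ if $\alpha\in A$, resp. all $s\in[t,t+\delta[\,\cap\mathbb{T}$ if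 $\alpha\notin A$ (the nabla fractional derivative of order $\alpha$). *)

theory Defs
  imports "HOL-Analysis.Analysis"
begin

definition time_scale :: "real set \<Rightarrow> bool" where
  "time_scale T \<longleftrightarrow> T \<noteq> {} \<and> closed T"

definition rho :: "real set \<Rightarrow> real \<Rightarrow> real" where
  "rho T t = (if {s \<in> T. s < t} = {} then Inf T else Sup {s \<in> T. s < t})"

definition sigma :: "real set \<Rightarrow> real \<Rightarrow> real" where
  "sigma T t = (if {s \<in> T. t < s} = {} then Sup T else Inf {s \<in> T. t < s})"

definition T_kappa :: "real set \<Rightarrow> real set" where
  "T_kappa T = (if bdd_below T \<and> sigma T (Inf T) > Inf T then T - {Inf T} else T)"

definition Aset :: "real set" where
  "Aset = {a. a \<in> {0<..1} \<and> (\<exists>q::nat. odd q \<and> q > 0 \<and> a = 1 / real q)}"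

definition fpow :: "real \<Rightarrow> real \<Rightarrow> real" where
  "fpow \<alpha> x = (if \<alpha> \<in> Aset then root (nat (round (1 / \<alpha>))) x else x powr \<alpha>)"

definition has_nabla_frac_deriv ::
  "real set \<Rightarrow> real \<Rightarrow> (real \<Rightarrow> real) \<Rightarrow> real \<Rightarrow> real \<Rightarrow> bool" where
  "has_nabla_frac_deriv T \<alpha> f t D \<longleftrightarrow>
     (\<forall>\<epsilon>>0. \<exists>\<delta>>0. \<forall>s\<in>T.
        (if \<alpha> \<in> Aset then t - \<delta> < s \<and> s < t + \<delta> else t \<le> s \<and> s < t + \<delta>) \<longrightarrow>
        \<bar>(f s - f (rho T t)) - D * fpow \<alpha> (s - rho T t)\<bar>
          \<le> \<epsilon> * (\<bar>s - rho T t\<bar> powr \<alpha>))"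

end

theory Submission
  imports Defs
begin

lemma fpow_pos: "x > 0 \<Longrightarrow> fpow \<alpha> x = x powr \<alpha>"
proof (cases "\<alpha> \<in> Aset")
  case True
  assume x: "x > 0"
  from True obtain q :: nat where q: "odd q" "q > 0" "\<alpha> = 1 / real q" unfolding Aset_def by auto
  have "nat (round (1 / \<alpha>)) = q" using q by simp
  then show ?thesis using True q x by (simp add: fpow_def root_powr_inverse)
next
  case False then show ?thesis by (simp add: fpow_def)
qed

lemma rho_le: assumes "t \<in> T" shows "rho T t \<le> t"
proof (cases "{s \<in> T. s < t} = {}")
  case True
  then have "\<forall>s\<in>T. t \<le> s" by auto
  then have "Inf T = t" using assms by (meson cInf_eq_minimum)
  then show ?thesis using True by (simp add: rho_def)
next
  case False
  then show ?thesis unfolding rho_def by (auto intro: cSup_least)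
qed

lemma below_rho: assumes "s \<in> T" "s < t" shows "s \<le> rho T t"
proof -
  have ne: "{s \<in> T. s < t} \<noteq> {}" using assms by auto
  have "bdd_above {s \<in> T. s < t}" by (rule bdd_aboveI[of _ t]) auto
  then show ?thesis using ne assms unfolding rho_def by (auto intro: cSup_upper)
qed

theorem proposition3p6:
  fixes T :: "real set" and \<alpha> t :: real
  assumes "time_scale T" and "0 < \<alpha>" and "\<alpha> \<le> 1" and "t \<in> T_kappa T"
  shows "has_nabla_frac_deriv T \<alpha> (\<lambda>s. s) t
           (if \<alpha> \<noteq> 1 then (t - rho T t) powr (1 - \<alpha>) else 1)"
proof -
  have tT: "t \<in> T" using assms(4) unfolding T_kappa_def by (auto split: if_splits)
  define r where "r = rho T t"
  have rt: "r \<le> t" using rho_le[OF tT] r_def by simp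
  show ?thesis
  proof (cases "\<alpha> = 1")
    case True
    have A: "1 \<in> Aset" unfolding Aset_def by (auto intro!: exI[of _ 1])
    have "fpow 1 x = x" for x using A by (simp add: fpow_def)
    then show ?thesis using True unfolding has_nabla_frac_deriv_def by auto
  next
    case False
    then have a1: "\<alpha> < 1" using assms by simp
    show ?thesis
    proof (cases "r = t")
      case True
      show ?thesis unfolding has_nabla_frac_deriv_def
      proof (intro allI impI)
        fix \<epsilon> :: real assume e: "\<epsilon> > 0"
        define \<delta> where "\<delta> = \<epsilon> powr (1 / (1 - \<alpha>))"
        have d: "\<delta> > 0" using e by (simp add: \<delta>_def)
        have key: "\<bar>s - t\<bar> \<le> \<epsilon> * \<bar>s - t\<bar> powr \<alpha>" if "\<bar>s - t\<bar> < \<delta>" for s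
        proof (cases "s = t")
          case True then show ?thesis by simp
        next
          case False
          let ?u = "\<bar>s - t\<bar>"
          have u: "?u > 0" using False by simp
          have "?u powr (1 - \<alpha>) \<le> \<delta> powr (1 - \<alpha>)"
            using that u a1 by (intro powr_mono2) auto
          also have "\<delta> powr (1 - \<alpha>) = \<epsilon>" using e a1 by (simp add: \<delta>_def powr_powr)
          finally have "?u powr (1 - \<alpha>) \<le> \<epsilon>" .
          then have "?u powr (1 - \<alpha>) * ?u powr \<alpha> \<le> \<epsilon> * ?u powr \<alpha>"
            by (intro mult_right_mono) auto
          moreover have "?u powr (1 - \<alpha>) * ?u powr \<alpha> = ?u" using u by (simp add: powr_add[symmetric])
          ultimately show ?thesis by simp
        qed
        show "\<exists>\<delta>>0. \<forall>s\<in>T. (if \<alpha> \<in> Aset then t - \<delta> < s \<and> s < t + \<delta> else t \<le> s \<and> s < t + \<delta>) \<longrightarrow>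
          \<bar>s - rho T t - (if \<alpha> \<noteq> 1 then (t - rho T t) powr (1 - \<alpha>) else 1) * fpow \<alpha> (s - rho T t)\<bar>
          \<le> \<epsilon> * \<bar>s - rho T t\<bar> powr \<alpha>"
          unfolding r_def[symmetric] True
        proof (intro exI[of _ \<delta>] conjI ballI impI)
          show "\<delta> > 0" using d .
          fix s assume "s \<in> T" and c: "if \<alpha> \<in> Aset then t - \<delta> < s \<and> s < t + \<delta> else t \<le> s \<and> s < t + \<delta>"
          have "\<bar>s - t\<bar> < \<delta>" using c d by (auto split: if_splits)
          then show "\<bar>s - t - (if \<alpha> \<noteq> 1 then (t - t) powr (1 - \<alpha>) else 1) * fpow \<alpha> (s - t)\<bar> \<le> \<epsilon> * \<bar>s - t\<bar> powr \<alpha>"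
            using key False by simp
        qed
      qed
    next
      case False
      define h where "h = t - r"
      have h: "h > 0" using False rt h_def by simp
      define g where "g s = (s - r) - h powr (1 - \<alpha>) * (s - r) powr \<alpha>" for s
      have gt: "g t = 0" using h by (simp add: g_def h_def[symmetric] powr_add[symmetric])
      have "isCont g t" unfolding g_def using h h_def by (intro continuous_intros) auto
      then have lim: "g \<midarrow>t\<rightarrow> 0" using gt by (simp add: isCont_def)
      show ?thesis unfolding has_nabla_frac_deriv_def
      proof (intro allI impI)
        fix \<epsilon> :: real assume e: "\<epsilon> > 0"
        have "\<epsilon> * h powr \<alpha> > 0" using e h by simp
        with lim obtain d where d: "d > 0" and dd: "\<And>x. x \<noteq> t \<and> norm (x - t) < d \<Longrightarrow> norm (g x - 0) < \<epsilon> * h powr \<alpha>"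
          unfolding LIM_eq by blast
        define \<delta> where "\<delta> = min d h"
        have key: "\<bar>s - r - h powr (1 - \<alpha>) * fpow \<alpha> (s - r)\<bar> \<le> \<epsilon> * \<bar>s - r\<bar> powr \<alpha>"
          if s: "s \<in> T" "t - \<delta> < s" "s < t + \<delta>" for s
        proof -
          have "s \<ge> t"
          proof (rule ccontr)
            assume "\<not> s \<ge> t"
            then have "s \<le> r" using below_rho[OF s(1)] r_def by simp
            then show False using s(2) \<delta>_def h_def by simp
          qed
          then have sr: "s - r \<ge> h" "s - r > 0" using h h_def by auto
          have "\<bar>g s\<bar> \<le> \<epsilon> * h powr \<alpha>"
          proof (cases "s = t")
            case True then show ?thesis using gt \<open>\<epsilon> * h powr \<alpha> > 0\<close> by simp
          next
            case False
            have "norm (s - t) < d" using s \<delta>_def \<open>s \<ge> t\<close> by auto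
            then show ?thesis using dd[of s] False by simp
          qed
          also have "\<dots> \<le> \<epsilon> * \<bar>s - r\<bar> powr \<alpha>"
            using sr e h assms(2) by (intro mult_left_mono powr_mono2) auto
          finally show ?thesis using sr by (simp add: g_def fpow_pos)
        qed
        show "\<exists>\<delta>>0. \<forall>s\<in>T. (if \<alpha> \<in> Aset then t - \<delta> < s \<and> s < t + \<delta> else t \<le> s \<and> s < t + \<delta>) \<longrightarrow>
          \<bar>s - rho T t - (if \<alpha> \<noteq> 1 then (t - rho T t) powr (1 - \<alpha>) else 1) * fpow \<alpha> (s - rho T t)\<bar>
          \<le> \<epsilon> * \<bar>s - rho T t\<bar> powr \<alpha>"
          unfolding r_def[symmetric] h_def[symmetric]
        proof (intro exI[of _ \<delta>] conjI ballI impI)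
          show "\<delta> > 0" using d h \<delta>_def by simp
          fix s assume "s \<in> T" and c: "if \<alpha> \<in> Aset then t - \<delta> < s \<and> s < t + \<delta> else t \<le> s \<and> s < t + \<delta>"
          have "t - \<delta> < s \<and> s < t + \<delta>" using c \<open>\<delta> > 0\<close> by (auto split: if_splits)
          then show "\<bar>s - r - (if \<alpha> \<noteq> 1 then h powr (1 - \<alpha>) else 1) * fpow \<alpha> (s - r)\<bar> \<le> \<epsilon> * \<bar>s - r\<bar> powr \<alpha>"
            using key \<open>s \<in> T\<close> a1 by auto
        qed
      qed
    qed
  qed
qed

end
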